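(* Let $X$ be a metric space with bounded geometry. For every $q,k\geq 1$, $\mathrm{TO}^{q+k}_{X\times\mathbb{R}^k}(r) \lesssim \mathrm{TO}^q_X(r)\,\mathrm{TO}^k_{\mathbb{R}^k}(r) \simeq \mathrm{TO}^q_X(r)$.
   Context: $\mathbb R^k$ has the Euclidean metric and $X\times\mathbb R^k$ the $\ell^\infty$ product metric. Bounded geometry: for every $R\ge r>0$ each ball of radius $R$ is covered by a uniformly bounded number of balls of radius $r$. For $Z\subseteq X$, $\mathrm{Cov}^1(Z)$ is the minimal number of closed radius-$1$ balls of $X$ covering $Z$. For continuous $f:Z\to\mathbb R^q$, $\mathrm{Ov}(f)=\sup_{z}\mathrm{Cov}^1(f^{-1}(z))$, $\mathrm{TO}^q(Z)=\min_f\mathrm{Ov}(f)$, $\mathrm{TO}^q_X(r)=\max\{\mathrm{TO}^q(Z): Z\subseteq X,\mathrm{Cov}^1(Z)\le r\}$. $f\lesssim g$ means there is $C$ with $f(r)\le Cg(Cr)+C$ for all $r$; $\simeq$ means both directions. *)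

theory Defs
  imports "HOL-Analysis.Analysis"
begin

definition Cov1 :: "'a set \<Rightarrow> ('a \<Rightarrow> 'a \<Rightarrow> real) \<Rightarrow> 'a set \<Rightarrow> enat" where
  "Cov1 M d Z = (INF C \<in> {C. finite C \<and> C \<subseteq> M \<and> Z \<subseteq> (\<Union>c\<in>C. Metric_space.mcball M d c 1)}.
                    enat (card C))"

definition Ov :: "'a set \<Rightarrow> ('a \<Rightarrow> 'a \<Rightarrow> real) \<Rightarrow> 'a set \<Rightarrow> ('a \<Rightarrow> 'b) \<Rightarrow> enat" where
  "Ov M d Z f = (SUP z \<in> UNIV. Cov1 M d {x \<in> Z. f x = z})"

definition TO :: "'q::finite itself \<Rightarrow> 'a set \<Rightarrow> ('a \<Rightarrow> 'a \<Rightarrow> real) \<Rightarrow> 'a set \<Rightarrow> enat" where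
  "TO q M d Z = (INF f \<in> {f :: 'a \<Rightarrow> real^'q.
        continuous_map (subtopology (Metric_space.mtopology M d) Z) euclidean f}. Ov M d Z f)"

definition TO_fun :: "'q::finite itself \<Rightarrow> 'a set \<Rightarrow> ('a \<Rightarrow> 'a \<Rightarrow> real) \<Rightarrow> real \<Rightarrow> ereal" where
  "TO_fun q M d r = ereal_of_enat
      (SUP Z \<in> {Z. Z \<subseteq> M \<and> ereal_of_enat (Cov1 M d Z) \<le> ereal r}. TO q M d Z)"

definition bounded_geometry :: "'a set \<Rightarrow> ('a \<Rightarrow> 'a \<Rightarrow> real) \<Rightarrow> bool" where
  "bounded_geometry M d \<longleftrightarrow> (\<forall>r R. 0 < r \<and> r \<le> R \<longrightarrow>
     (\<exists>N::nat. \<forall>x\<in>M. \<exists>C. finite C \<and> C \<subseteq> M \<and> card C \<le> N \<and>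
        Metric_space.mcball M d x R \<subseteq> (\<Union>c\<in>C. Metric_space.mcball M d c r)))"

definition linf_prod_dist :: "('a \<Rightarrow> 'a \<Rightarrow> real) \<Rightarrow> ('a \<times> (real^'k)) \<Rightarrow> ('a \<times> (real^'k)) \<Rightarrow> real" where
  "linf_prod_dist d p p' = max (d (fst p) (fst p')) (dist (snd p) (snd p'))"

definition lesssim :: "(real \<Rightarrow> ereal) \<Rightarrow> (real \<Rightarrow> ereal) \<Rightarrow> bool" where
  "lesssim f g \<longleftrightarrow> (\<exists>C::real. C > 0 \<and> (\<forall>r. f r \<le> ereal C * g (C * r) + ereal C))"

end

theory Submission
  imports Defs
begin

definition comb :: "real^'q \<Rightarrow> real^'k \<Rightarrow> real^('q::finite + 'k::finite)" where
  "comb u v = (\<chi> i. case i of Inl a \<Rightarrow> u $ a | Inr b \<Rightarrow> v $ b)"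

lemma comb_Inl [simp]: "comb u v $ Inl a = u $ a" by (simp add: comb_def)
lemma comb_Inr [simp]: "comb u v $ Inr b = v $ b" by (simp add: comb_def)

lemma dist_comb:
  fixes u u' :: "real^'q::finite" and v v' :: "real^'k::finite"
  shows "dist (comb u v) (comb u' v') \<le> real CARD('q) * dist u u' + real CARD('k) * dist v v'"
proof -
  have "dist (comb u v) (comb u' v') = norm (comb u v - comb u' v')" by (simp add: dist_norm)
  also have "\<dots> \<le> (\<Sum>i\<in>UNIV. \<bar>(comb u v - comb u' v') $ i\<bar>)" by (rule norm_le_l1_cart)
  also have "\<dots> = (\<Sum>i\<in>(UNIV::'q set) <+> (UNIV::'k set). \<bar>(comb u v - comb u' v') $ i\<bar>)" by simp
  also have "\<dots> = (\<Sum>a\<in>UNIV. \<bar>u $ a - u' $ a\<bar>) + (\<Sum>b\<in>UNIV. \<bar>v $ b - v' $ b\<bar>)"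
    by (subst sum.Plus) (auto simp: o_def)
  also have "\<dots> \<le> (\<Sum>a\<in>(UNIV::'q set). dist u u') + (\<Sum>b\<in>(UNIV::'k set). dist v v')"
  proof (intro add_mono sum_mono)
    fix a :: 'q show "\<bar>u $ a - u' $ a\<bar> \<le> dist u u'"
      using component_le_norm_cart[of "u - u'" a] by (simp add: dist_norm)
  next
    fix b :: 'k show "\<bar>v $ b - v' $ b\<bar> \<le> dist v v'"
      using component_le_norm_cart[of "v - v'" b] by (simp add: dist_norm)
  qed
  also have "\<dots> = real CARD('q) * dist u u' + real CARD('k) * dist v v'" by simp
  finally show ?thesis .
qed

lemma cont_iff:
  assumes "Metric_space M d" "Z \<subseteq> M"
  shows "continuous_map (subtopology (Metric_space.mtopology M d) Z) euclidean (f :: 'a \<Rightarrow> 'b::metric_space)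
     \<longleftrightarrow> (\<forall>a\<in>Z. \<forall>e>0. \<exists>\<delta>>0. \<forall>x. x \<in> Z \<and> d a x < \<delta> \<longrightarrow> dist (f a) (f x) < e)"
proof -
  interpret Submetric M d Z
    using assms by (simp add: Submetric_def Submetric_axioms_def)
  have "subtopology (Metric_space.mtopology M d) Z = sub.mtopology"
    by (simp add: mtopology_submetric)
  then show ?thesis
    using sub.metric_continuous_map[OF Met_TC.Metric_space_axioms, of f]
    by simp
qed

lemma prod_metric:
  assumes "Metric_space M d"
  shows "Metric_space (M \<times> (UNIV :: (real^'k::finite) set)) (linf_prod_dist d)"
proof -
  interpret Metric_space M d by fact
  show ?thesis
  proof
    fix x y :: "'a \<times> (real^'k)"
    show "0 \<le> linf_prod_dist d x y" "linf_prod_dist d x y = linf_prod_dist d y x"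
      by (auto simp: linf_prod_dist_def commute max_def dist_commute)
  next
    fix x y assume xy: "x \<in> M \<times> (UNIV :: (real^'k::finite) set)" "y \<in> M \<times> (UNIV :: (real^'k::finite) set)"
    have a: "fst x \<in> M" "fst y \<in> M" using xy by auto
    show "(linf_prod_dist d x y = 0) = (x = y)"
      using nonneg[of "fst x" "fst y"] zero[OF a] 
      unfolding linf_prod_dist_def prod_eq_iff max_def
      by (smt (verit) zero_le_dist dist_eq_0_iff)
  next
    fix x y z assume "x \<in> M \<times> (UNIV :: (real^'k::finite) set)" "y \<in> M \<times> (UNIV :: (real^'k::finite) set)"
       "z \<in> M \<times> (UNIV :: (real^'k::finite) set)"
    then show "linf_prod_dist d x z \<le> linf_prod_dist d x y + linf_prod_dist d y z"
      unfolding linf_prod_dist_def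
      using triangle[of "fst x" "fst y" "fst z"] dist_triangle[of "snd x" "snd z" "snd y"]
        nonneg[of "fst x" "fst y"] nonneg[of "fst y" "fst z"]
      by (auto simp: max_def)
  qed
qed


lemma Cov_mono: "A \<subseteq> B \<Longrightarrow> Cov1 M d A \<le> Cov1 M d B"
  unfolding Cov1_def by (rule INF_mono) blast

lemma Cov_empty: "Cov1 M d {} = 0"
proof -
  have "Cov1 M d {} \<le> enat (card ({}::'a set))"
    unfolding Cov1_def by (rule INF_lower) auto
  then show ?thesis by (simp add: enat_0)
qed

lemma Cov_single:
  assumes "Metric_space M d" "x \<in> M"
  shows "Cov1 M d {x} \<le> 1"
proof -
  have "Cov1 M d {x} \<le> enat (card {x})"
    unfolding Cov1_def
    by (rule INF_lower) (use assms Metric_space.centre_in_mcball_iff in fastforce)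
  then show ?thesis by (simp add: one_enat_def)
qed

lemma Cov_nonempty:
  assumes "Z \<noteq> {}"
  shows "1 \<le> Cov1 M d Z"
  unfolding Cov1_def
proof (rule INF_greatest)
  fix C assume C: "C \<in> {C. finite C \<and> C \<subseteq> M \<and> Z \<subseteq> (\<Union>c\<in>C. Metric_space.mcball M d c 1)}"
  then have "C \<noteq> {}" using assms by auto
  with C have "card C \<ge> 1" by (simp add: Suc_leI card_gt_0_iff)
  then show "1 \<le> enat (card C)" by (simp add: one_enat_def)
qed

lemma TO_le_Cov:
  "TO (q::'q::finite itself) M d Z \<le> Cov1 M d Z"
proof -
  have "TO q M d Z \<le> Ov M d Z (\<lambda>_. 0 :: real^'q)"
    unfolding TO_def by (rule INF_lower) simp
  also have "\<dots> \<le> Cov1 M d Z"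
    unfolding Ov_def by (rule SUP_least) (rule Cov_mono, auto)
  finally show ?thesis .
qed

lemma TO_ge1:
  assumes "z0 \<in> Z"
  shows "1 \<le> TO (q::'q::finite itself) M d Z"
  unfolding TO_def
proof (rule INF_greatest)
  fix f :: "'a \<Rightarrow> real^'q"
  have "1 \<le> Cov1 M d {x \<in> Z. f x = f z0}"
    by (rule Cov_nonempty) (use assms in auto)
  also have "\<dots> \<le> Ov M d Z f" unfolding Ov_def by (rule SUP_upper) simp
  finally show "1 \<le> Ov M d Z f" .
qed


lemma Cov_fst:
  fixes Z :: "('a \<times> (real^'k::finite)) set"
  assumes MS: "Metric_space M d"
  shows "Cov1 M d (fst ` Z) \<le> Cov1 (M \<times> (UNIV :: (real^'k) set)) (linf_prod_dist d) Z"
  unfolding Cov1_def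
proof (rule INF_mono)
  fix C assume C: "C \<in> {C. finite C \<and> C \<subseteq> M \<times> (UNIV :: (real^'k) set) \<and>
     Z \<subseteq> (\<Union>c\<in>C. Metric_space.mcball (M \<times> (UNIV :: (real^'k) set)) (linf_prod_dist d) c 1)}"
  have "fst ` C \<in> {C. finite C \<and> C \<subseteq> M \<and> fst ` Z \<subseteq> (\<Union>c\<in>C. Metric_space.mcball M d c 1)}"
  proof -
    have "fst ` Z \<subseteq> (\<Union>c\<in>fst ` C. Metric_space.mcball M d c 1)"
    proof
      fix x assume "x \<in> fst ` Z"
      then obtain p where p: "p \<in> Z" "x = fst p" by auto
      then obtain c where c: "c \<in> C" "p \<in> Metric_space.mcball (M \<times> (UNIV :: (real^'k) set)) (linf_prod_dist d) c 1"
        using C by blast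
      then have "x \<in> Metric_space.mcball M d (fst c) 1"
        using p by (cases c) (auto simp: Metric_space.in_mcball[OF MS] Metric_space.in_mcball[OF prod_metric[OF MS]] linf_prod_dist_def)
      then show "x \<in> (\<Union>c\<in>fst ` C. Metric_space.mcball M d c 1)" using c by blast
    qed
    then show ?thesis using C by auto
  qed
  moreover have "enat (card (fst ` C)) \<le> enat (card C)"
    using C by (simp add: card_image_le)
  ultimately show "\<exists>C'\<in>{C. finite C \<and> C \<subseteq> M \<and> fst ` Z \<subseteq> (\<Union>c\<in>C. Metric_space.mcball M d c 1)}.
      enat (card C') \<le> enat (card C)" by blast
qed

lemma Cov_fiber:
  fixes Z :: "('a \<times> (real^'k::finite)) set" and f :: "'a \<Rightarrow> real^'q::finite"
  assumes MS: "Metric_space M d"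
  shows "Cov1 (M \<times> (UNIV :: (real^'k) set)) (linf_prod_dist d) {p \<in> Z. comb (f (fst p)) (snd p) = w}
     \<le> Cov1 M d {x \<in> fst ` Z. f x = (\<chi> a. w $ Inl a)}"
  unfolding Cov1_def
proof (rule INF_mono)
  define b :: "real^'k" where "b = (\<chi> j. w $ Inr j)"
  fix C assume C: "C \<in> {C. finite C \<and> C \<subseteq> M \<and> {x \<in> fst ` Z. f x = (\<chi> a. w $ Inl a)} \<subseteq> (\<Union>c\<in>C. Metric_space.mcball M d c 1)}"
  have "C \<times> {b} \<in> {C. finite C \<and> C \<subseteq> M \<times> (UNIV :: (real^'k) set) \<and>
     {p \<in> Z. comb (f (fst p)) (snd p) = w} \<subseteq> (\<Union>c\<in>C. Metric_space.mcball (M \<times> (UNIV :: (real^'k) set)) (linf_prod_dist d) c 1)}"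
  proof -
    have "{p \<in> Z. comb (f (fst p)) (snd p) = w} \<subseteq> (\<Union>c\<in>C \<times> {b}. Metric_space.mcball (M \<times> (UNIV :: (real^'k) set)) (linf_prod_dist d) c 1)"
    proof
      fix p assume p: "p \<in> {p \<in> Z. comb (f (fst p)) (snd p) = w}"
      then have h: "comb (f (fst p)) (snd p) = w" by simp
      have fp: "f (fst p) = (\<chi> a. w $ Inl a)"
        by (simp add: vec_eq_iff flip: h)
      have sp: "snd p = b"
        by (simp add: vec_eq_iff b_def flip: h)
      then have "fst p \<in> {x \<in> fst ` Z. f x = (\<chi> a. w $ Inl a)}" using p by auto
      then obtain c where c: "c \<in> C" "fst p \<in> Metric_space.mcball M d c 1" using C by blast
      then have "p \<in> Metric_space.mcball (M \<times> (UNIV :: (real^'k) set)) (linf_prod_dist d) (c, b) 1"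
      proof -
        have c1: "c \<in> M" "fst p \<in> M" "d c (fst p) \<le> 1" using c(2) by (auto simp: Metric_space.in_mcball[OF MS])
        have "p \<in> M \<times> (UNIV :: (real^'k) set)" using c1 by (simp add: mem_Times_iff)
        moreover have "linf_prod_dist d (c, b) p \<le> 1" using c1 sp by (simp add: linf_prod_dist_def)
        ultimately show ?thesis using c1 by (simp add: Metric_space.in_mcball[OF prod_metric[OF MS]])
      qed
      then show "p \<in> (\<Union>c\<in>C \<times> {b}. Metric_space.mcball (M \<times> (UNIV :: (real^'k) set)) (linf_prod_dist d) c 1)"
        using c by blast
    qed
    then show ?thesis using C by auto
  qed
  moreover have "card (C \<times> {b}) = card C" by (simp add: card_cartesian_product)
  ultimately show "\<exists>C'\<in>{C. finite C \<and> C \<subseteq> M \<times> (UNIV :: (real^'k) set) \<and>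
     {p \<in> Z. comb (f (fst p)) (snd p) = w} \<subseteq> (\<Union>c\<in>C. Metric_space.mcball (M \<times> (UNIV :: (real^'k) set)) (linf_prod_dist d) c 1)}.
      enat (card C') \<le> enat (card C)" by (intro bexI[where x="C \<times> {b}"]) simp_all
qed

lemma Ov_comb:
  fixes Z :: "('a \<times> (real^'k::finite)) set" and f :: "'a \<Rightarrow> real^'q::finite"
  assumes MS: "Metric_space M d"
  shows "Ov (M \<times> (UNIV :: (real^'k) set)) (linf_prod_dist d) Z (\<lambda>p. comb (f (fst p)) (snd p))
     \<le> Ov M d (fst ` Z) f"
  unfolding Ov_def
proof (rule SUP_least)
  fix w :: "real^('q+'k)"
  have "Cov1 (M \<times> (UNIV :: (real^'k) set)) (linf_prod_dist d) {p \<in> Z. comb (f (fst p)) (snd p) = w}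
     \<le> Cov1 M d {x \<in> fst ` Z. f x = (\<chi> a. w $ Inl a)}" by (rule Cov_fiber[OF MS])
  also have "\<dots> \<le> (SUP z\<in>UNIV. Cov1 M d {x \<in> fst ` Z. f x = z})" by (rule SUP_upper) simp
  finally show "Cov1 (M \<times> (UNIV :: (real^'k) set)) (linf_prod_dist d) {x \<in> Z. comb (f (fst x)) (snd x) = w}
     \<le> (SUP z\<in>UNIV. Cov1 M d {x \<in> fst ` Z. f x = z})" .
qed


lemma cont_comb:
  fixes Z :: "('a \<times> (real^'k::finite)) set" and f :: "'a \<Rightarrow> real^'q::finite"
  assumes MS: "Metric_space M d" and Z: "Z \<subseteq> M \<times> UNIV"
    and cf: "continuous_map (subtopology (Metric_space.mtopology M d) (fst ` Z)) euclidean f"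
  shows "continuous_map (subtopology (Metric_space.mtopology (M \<times> (UNIV :: (real^'k) set)) (linf_prod_dist d)) Z)
           euclidean (\<lambda>p. comb (f (fst p)) (snd p))"
proof -
  have ZX: "fst ` Z \<subseteq> M" using Z by auto
  have F: "\<forall>a\<in>fst ` Z. \<forall>e>0. \<exists>\<delta>>0. \<forall>x. x \<in> fst ` Z \<and> d a x < \<delta> \<longrightarrow> dist (f a) (f x) < e"
    by (rule iffD1[OF cont_iff[OF MS ZX] cf])
  define K where "K = real CARD('q) + real CARD('k)"
  have K: "K > 0" by (simp add: K_def add_pos_pos)
  show ?thesis
    unfolding cont_iff[OF prod_metric[OF MS] Z]
  proof (intro ballI allI impI)
    fix a e assume a: "a \<in> Z" and e: "(e::real) > 0"
    obtain \<delta>1 where d1: "\<delta>1 > 0" "\<forall>x. x \<in> fst ` Z \<and> d (fst a) x < \<delta>1 \<longrightarrow> dist (f (fst a)) (f x) < e / K"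
      using F[rule_format, OF imageI[OF a] divide_pos_pos[OF e K]] by blast
    show "\<exists>\<delta>>0. \<forall>x. x \<in> Z \<and> linf_prod_dist d a x < \<delta> \<longrightarrow>
          dist (comb (f (fst a)) (snd a)) (comb (f (fst x)) (snd x)) < e"
    proof (intro exI[of _ "min \<delta>1 (e / K)"] conjI allI impI)
      show "0 < min \<delta>1 (e / K)" using d1 e K by simp
      fix x assume x: "x \<in> Z \<and> linf_prod_dist d a x < min \<delta>1 (e / K)"
      then have h1: "dist (f (fst a)) (f (fst x)) < e / K"
        using d1 by (auto simp: linf_prod_dist_def)
      have h2: "dist (snd a) (snd x) < e / K" using x by (auto simp: linf_prod_dist_def)
      have "dist (comb (f (fst a)) (snd a)) (comb (f (fst x)) (snd x))
         \<le> real CARD('q) * dist (f (fst a)) (f (fst x)) + real CARD('k) * dist (snd a) (snd x)"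
        by (rule dist_comb)
      also have "\<dots> < real CARD('q) * (e / K) + real CARD('k) * (e / K)"
        using h1 h2 by (intro add_strict_mono mult_strict_left_mono) auto
      also have "\<dots> = K * (e / K)" by (simp only: distrib_right K_def)
      also have "\<dots> = e" using K by simp
      finally show "dist (comb (f (fst a)) (snd a)) (comb (f (fst x)) (snd x)) < e" .
    qed
  qed
qed

lemma TO_prod:
  fixes Z :: "('a \<times> (real^'k::finite)) set"
  assumes MS: "Metric_space M d" and Z: "Z \<subseteq> M \<times> UNIV"
  shows "TO TYPE('q::finite + 'k) (M \<times> (UNIV :: (real^'k) set)) (linf_prod_dist d) Z \<le> TO TYPE('q) M d (fst ` Z)"
  unfolding TO_def
proof (rule INF_mono)
  fix f :: "'a \<Rightarrow> real^'q"
  assume "f \<in> {f. continuous_map (subtopology (Metric_space.mtopology M d) (fst ` Z)) euclidean f}"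
  then have cf: "continuous_map (subtopology (Metric_space.mtopology M d) (fst ` Z)) euclidean f" by simp
  show "\<exists>g\<in>{g :: _ \<Rightarrow> real^('q+'k). continuous_map (subtopology (Metric_space.mtopology (M \<times> (UNIV :: (real^'k) set)) (linf_prod_dist d)) Z) euclidean g}.
      Ov (M \<times> UNIV) (linf_prod_dist d) Z g \<le> Ov M d (fst ` Z) f"
    by (rule bexI[where x="\<lambda>p. comb (f (fst p)) (snd p)"], rule Ov_comb[OF MS], simp add: cont_comb[OF MS Z cf])
qed


lemma TOfun_prod_le:
  assumes MS: "Metric_space M d"
  shows "TO_fun TYPE('q::finite + 'k::finite) (M \<times> (UNIV :: (real^'k) set)) (linf_prod_dist d) r
     \<le> TO_fun TYPE('q) M d r"
  unfolding TO_fun_def ereal_of_enat_le_iff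
proof (rule SUP_mono)
  fix Z :: "('a \<times> (real^'k)) set"
  assume Z: "Z \<in> {Z. Z \<subseteq> M \<times> UNIV \<and> ereal_of_enat (Cov1 (M \<times> UNIV) (linf_prod_dist d) Z) \<le> ereal r}"
  have "ereal_of_enat (Cov1 M d (fst ` Z)) \<le> ereal_of_enat (Cov1 (M \<times> UNIV) (linf_prod_dist d) Z)"
    using Cov_fst[OF MS, of Z] by (simp only: ereal_of_enat_le_iff)
  moreover have "ereal_of_enat (Cov1 (M \<times> UNIV) (linf_prod_dist d) Z) \<le> ereal r" using Z by simp
  ultimately have "ereal_of_enat (Cov1 M d (fst ` Z)) \<le> ereal r" by (rule order_trans)
  then have "fst ` Z \<in> {Z. Z \<subseteq> M \<and> ereal_of_enat (Cov1 M d Z) \<le> ereal r}" using Z by auto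
  moreover have "TO TYPE('q + 'k) (M \<times> (UNIV :: (real^'k) set)) (linf_prod_dist d) Z \<le> TO TYPE('q) M d (fst ` Z)"
    using TO_prod[OF MS] Z by blast
  ultimately show "\<exists>Z'\<in>{Z. Z \<subseteq> M \<and> ereal_of_enat (Cov1 M d Z) \<le> ereal r}.
       TO TYPE('q + 'k) (M \<times> UNIV) (linf_prod_dist d) Z \<le> TO TYPE('q) M d Z'" by blast
qed

lemma eoe_le1: "x \<le> 1 \<Longrightarrow> ereal_of_enat x \<le> 1"
  by (cases x) (auto simp: one_enat_def)
lemma eoe_ge1: "1 \<le> x \<Longrightarrow> 1 \<le> ereal_of_enat x"
  by (cases x) (auto simp: one_enat_def)

lemma TOk_le1: "TO_fun TYPE('k::finite) (UNIV :: (real^'k) set) dist r \<le> 1"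
proof -
  have "(SUP Z\<in>{Z. Z \<subseteq> (UNIV :: (real^'k) set) \<and> ereal_of_enat (Cov1 UNIV dist Z) \<le> ereal r}. TO TYPE('k) UNIV dist Z) \<le> 1"
  proof (rule SUP_least)
    fix Z :: "(real^'k) set"
    have "TO TYPE('k) UNIV dist Z \<le> Ov UNIV dist Z (\<lambda>x. x)"
      unfolding TO_def
      by (rule INF_lower) (auto simp: cont_iff[OF Met_TC.Metric_space_axioms])
    also have "\<dots> \<le> 1"
      unfolding Ov_def
    proof (rule SUP_least)
      fix z :: "real^'k"
      have "Cov1 UNIV dist {x \<in> Z. x = z} \<le> Cov1 UNIV dist {z}" by (rule Cov_mono) auto
      also have "\<dots> \<le> 1" by (rule Cov_single[OF Met_TC.Metric_space_axioms]) simp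
      finally show "Cov1 UNIV dist {x \<in> Z. x = z} \<le> 1" .
    qed
    finally show "TO TYPE('k) UNIV dist Z \<le> 1" .
  qed
  then show ?thesis unfolding TO_fun_def by (rule eoe_le1)
qed

lemma TOk_ge1:
  assumes r: "1 \<le> r"
  shows "1 \<le> TO_fun TYPE('k::finite) (UNIV :: (real^'k) set) dist r"
proof -
  have "Cov1 UNIV dist {0 :: real^'k} \<le> 1" by (rule Cov_single[OF Met_TC.Metric_space_axioms]) simp
  then have "ereal_of_enat (Cov1 UNIV dist {0 :: real^'k}) \<le> ereal r"
    using eoe_le1 r order_trans by fastforce
  then have "1 \<le> (SUP Z\<in>{Z. Z \<subseteq> (UNIV :: (real^'k) set) \<and> ereal_of_enat (Cov1 UNIV dist Z) \<le> ereal r}. TO TYPE('k) UNIV dist Z)"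
    by (intro SUP_upper2[where i="{0}"]) (auto intro: TO_ge1)
  then show ?thesis unfolding TO_fun_def by (rule eoe_ge1)
qed

lemma TO_small:
  assumes r: "r < 1"
  shows "TO_fun (q::'q::finite itself) M d r = 0"
proof -
  have "(SUP Z\<in>{Z. Z \<subseteq> M \<and> ereal_of_enat (Cov1 M d Z) \<le> ereal r}. TO q M d Z) \<le> 0"
  proof (rule SUP_least)
    fix Z assume Z: "Z \<in> {Z. Z \<subseteq> M \<and> ereal_of_enat (Cov1 M d Z) \<le> ereal r}"
    have "Cov1 M d Z = 0"
    proof (cases "Cov1 M d Z")
      case (enat n)
      then have "real n < 1" using Z r by auto
      then show ?thesis using enat by (simp add: enat_0)
    next
      case infinity
      then show ?thesis using Z by auto
    qed
    then show "TO q M d Z \<le> 0" using TO_le_Cov[of q M d Z] by simp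
  qed
  then show ?thesis unfolding TO_fun_def by (simp add: zero_ereal_def)
qed

lemma prod_eq: "TO_fun TYPE('q::finite) M d r * TO_fun TYPE('k::finite) (UNIV :: (real^'k) set) dist r = TO_fun TYPE('q) M d r"
proof (cases "r < 1")
  case True then show ?thesis by (simp add: TO_small)
next
  case False
  have "TO_fun TYPE('k::finite) (UNIV :: (real^'k) set) dist r = 1"
    by (rule antisym[OF TOk_le1 TOk_ge1]) (use False in simp)
  then show ?thesis by simp
qed

lemma ereal_le_plus1: "0 \<le> (x::ereal) \<Longrightarrow> x \<le> x + 1"
  by (cases x) auto

lemma TO_fun_nonneg: "0 \<le> TO_fun q M d r"
  unfolding TO_fun_def by simp

theorem corollary1p10:
  fixes M :: "'a set" and d :: "'a \<Rightarrow> 'a \<Rightarrow> real"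
  assumes "Metric_space M d" and "bounded_geometry M d"
  shows "lesssim (TO_fun TYPE('q::finite + 'k::finite) (M \<times> (UNIV :: (real^'k) set)) (linf_prod_dist d))
            (\<lambda>r. TO_fun TYPE('q) M d r * TO_fun TYPE('k) (UNIV :: (real^'k) set) dist r)
       \<and> lesssim (\<lambda>r. TO_fun TYPE('q) M d r * TO_fun TYPE('k) (UNIV :: (real^'k) set) dist r)
            (TO_fun TYPE('q) M d)
       \<and> lesssim (TO_fun TYPE('q) M d)
            (\<lambda>r. TO_fun TYPE('q) M d r * TO_fun TYPE('k) (UNIV :: (real^'k) set) dist r)"
proof -
  have A: "\<And>r. TO_fun TYPE('q) M d r \<le> ereal 1 * TO_fun TYPE('q) M d (1 * r) + ereal 1"
    using ereal_le_plus1[OF TO_fun_nonneg] by (simp add: one_ereal_def)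
  have B: "\<And>r. TO_fun TYPE('q + 'k) (M \<times> (UNIV :: (real^'k) set)) (linf_prod_dist d) r
            \<le> ereal 1 * TO_fun TYPE('q) M d (1 * r) + ereal 1"
    using TOfun_prod_le[OF assms(1)] A order_trans by blast
  show ?thesis unfolding lesssim_def prod_eq
    by (intro conjI exI[of _ 1]) (use A B in auto)
qed

end
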